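(* Consider the two-layer multi-item order fulfillment problem described in the context with a single FDC ($K=1$), any fixed costs $f_0,f_1\ge0$, and variable costs in $[a,b]$ for constants $b>a>0$. Then every online fulfillment policy $\mathrm{ALG}$ (deterministic or randomized) satisfies \[\mathfrak R(\mathrm{ALG})\ge\max\left\{1,\ \frac13\sqrt{\frac ba},\ \frac14\max_{n\ge2}\min\left\{n,\ \frac{f_0}{f_1+na}\right\}\right\},\] where the inner maximum is over integers $n\ge 2$.
   Context: Problem with one FDC (index $1$) and one RDC (index $0$, unlimited inventory). The FDC initially holds $I_{1,0}^i\ge0$ units of item $i$, never replenished. In periods $t=1,\dots,T$ an order $\boldsymbol S_t=(S_t^i)_i$ of nonnegative integers arrives; after observing it and the variable costs $c_{k,t}^i$, the policy must immediately and irrevocably choose $m_{0,t}^i,m_{1,t}^i\ge0$ with $m_{0,t}^i+m_{1,t}^i=S_t^i$ and $m_{1,t}^i\le I_{1,t-1}^i$, $I_{1,t}^i=I_{1,0}^i-\sum_{\tau\le t}m_{1,\tau}^i$. Period cost $\sum_{k=0,1}[f_k\mathbb{I}(\sum_im_{k,t}^i>0)+\sum_ic_{k,t}^im_{k,t}^i]$; total cost is the sum. An online policy (possibly randomized) decides in period $t$ using only fixed costs, initial inventories and orders/variable costs up to $t$. $\mathfrak R(\mathrm{ALG})$ is the supremum of $\mathrm{ALG}(I)/\mathrm{OPT}(I)$ ((expected) policy cost over offline optimal cost) over all numbers of items, horizons $T$, initial inventories, variable costs in $[a,b]$ and order sequences. *)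

theory Defs
  imports "HOL-Probability.Probability"
begin

text \<open>
  Single FDC (index 1) and RDC (index 0). Items are 0..<N, periods are 1..T.
  I0 i : initial FDC inventory of item i.
  S t i : order quantity of item i in period t.
  c k t i : variable cost of shipping one unit of item i from warehouse k in period t.
  m1 t i : quantity shipped from the FDC; the RDC ships m0 t i = S t i - m1 t i.
\<close>

type_synonym policy =
  "nat \<Rightarrow> (nat \<Rightarrow> nat) \<Rightarrow> nat \<Rightarrow> (nat \<Rightarrow> nat \<Rightarrow> nat)
     \<Rightarrow> (nat \<Rightarrow> nat \<Rightarrow> nat \<Rightarrow> real) \<Rightarrow> nat \<Rightarrow> nat"
  \<comment> \<open>arguments: N, I0, current period t, orders S, costs c, item i; result m1 t i\<close>

definition valid_costs :: "real \<Rightarrow> real \<Rightarrow> nat \<Rightarrow> nat \<Rightarrow> (nat \<Rightarrow> nat \<Rightarrow> nat \<Rightarrow> real) \<Rightarrow> bool" where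
  "valid_costs a b N T c \<longleftrightarrow>
     (\<forall>k\<in>{0,1}. \<forall>t\<in>{1..T}. \<forall>i<N. a \<le> c k t i \<and> c k t i \<le> b)"

definition feasible :: "nat \<Rightarrow> nat \<Rightarrow> (nat \<Rightarrow> nat) \<Rightarrow> (nat \<Rightarrow> nat \<Rightarrow> nat) \<Rightarrow> (nat \<Rightarrow> nat \<Rightarrow> nat) \<Rightarrow> bool" where
  "feasible N T I0 S m1 \<longleftrightarrow>
     (\<forall>t\<in>{1..T}. \<forall>i<N. m1 t i \<le> S t i \<and> (\<Sum>\<tau>\<in>{1..t}. m1 \<tau> i) \<le> I0 i)"

definition total_cost :: "real \<Rightarrow> real \<Rightarrow> nat \<Rightarrow> nat \<Rightarrow> (nat \<Rightarrow> nat \<Rightarrow> nat)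
     \<Rightarrow> (nat \<Rightarrow> nat \<Rightarrow> nat \<Rightarrow> real) \<Rightarrow> (nat \<Rightarrow> nat \<Rightarrow> nat) \<Rightarrow> real" where
  "total_cost f0 f1 N T S c m1 =
     (\<Sum>t\<in>{1..T}.
        f0 * (if (\<Sum>i<N. S t i - m1 t i) > 0 then 1 else 0)
      + f1 * (if (\<Sum>i<N. m1 t i) > 0 then 1 else 0)
      + (\<Sum>i<N. c 0 t i * real (S t i - m1 t i) + c 1 t i * real (m1 t i)))"

definition OPT :: "real \<Rightarrow> real \<Rightarrow> nat \<Rightarrow> nat \<Rightarrow> (nat \<Rightarrow> nat) \<Rightarrow> (nat \<Rightarrow> nat \<Rightarrow> nat)
     \<Rightarrow> (nat \<Rightarrow> nat \<Rightarrow> nat \<Rightarrow> real) \<Rightarrow> real" where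
  "OPT f0 f1 N T I0 S c = Inf {total_cost f0 f1 N T S c m1 | m1. feasible N T I0 S m1}"

definition decisions :: "policy \<Rightarrow> nat \<Rightarrow> (nat \<Rightarrow> nat) \<Rightarrow> (nat \<Rightarrow> nat \<Rightarrow> nat)
     \<Rightarrow> (nat \<Rightarrow> nat \<Rightarrow> nat \<Rightarrow> real) \<Rightarrow> (nat \<Rightarrow> nat \<Rightarrow> nat)" where
  "decisions pol N I0 S c = (\<lambda>t i. pol N I0 t S c i)"

text \<open>A deterministic online policy: the decision in period t depends only on the
  items, initial inventories and the orders/variable costs of periods 1..t
  (not on the horizon T nor on future data), and it is always feasible.\<close>
definition online_policy :: "real \<Rightarrow> real \<Rightarrow> policy \<Rightarrow> bool" where
  "online_policy a b pol \<longleftrightarrow>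
     (\<forall>N I0 I0' t S S' c c' i.
        (\<forall>j<N. I0 j = I0' j) \<and>
        (\<forall>\<tau>\<in>{1..t}. \<forall>j<N. S \<tau> j = S' \<tau> j \<and> c 0 \<tau> j = c' 0 \<tau> j \<and> c 1 \<tau> j = c' 1 \<tau> j)
        \<longrightarrow> pol N I0 t S c i = pol N I0' t S' c' i)
   \<and> (\<forall>N T I0 S c. valid_costs a b N T c \<longrightarrow> feasible N T I0 S (decisions pol N I0 S c))"

text \<open>A randomized online policy: a random choice (on a probability space M) of a
  deterministic online policy, with measurable cost on every instance.
  Deterministic policies are the case of constant P.\<close>
definition randomized_policy :: "real \<Rightarrow> real \<Rightarrow> real \<Rightarrow> real \<Rightarrow> 'w measure \<Rightarrow> ('w \<Rightarrow> policy) \<Rightarrow> bool" where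
  "randomized_policy a b f0 f1 M P \<longleftrightarrow>
     prob_space M
   \<and> (\<forall>\<omega>\<in>space M. online_policy a b (P \<omega>))
   \<and> (\<forall>N T I0 S c. valid_costs a b N T c \<longrightarrow>
        (\<lambda>\<omega>. total_cost f0 f1 N T S c (decisions (P \<omega>) N I0 S c)) \<in> borel_measurable M)"

definition expected_cost :: "real \<Rightarrow> real \<Rightarrow> 'w measure \<Rightarrow> ('w \<Rightarrow> policy) \<Rightarrow> nat \<Rightarrow> nat
     \<Rightarrow> (nat \<Rightarrow> nat) \<Rightarrow> (nat \<Rightarrow> nat \<Rightarrow> nat) \<Rightarrow> (nat \<Rightarrow> nat \<Rightarrow> nat \<Rightarrow> real) \<Rightarrow> real" where
  "expected_cost f0 f1 M P N T I0 S c =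
     (LINT \<omega>|M. total_cost f0 f1 N T S c (decisions (P \<omega>) N I0 S c))"

definition competitive_ratio :: "real \<Rightarrow> real \<Rightarrow> real \<Rightarrow> real \<Rightarrow> 'w measure \<Rightarrow> ('w \<Rightarrow> policy) \<Rightarrow> ereal" where
  "competitive_ratio a b f0 f1 M P =
     (SUP x \<in> {(N, T, I0, S, c). valid_costs a b N T c}.
        (case x of (N, T, I0, S, c) \<Rightarrow>
           ereal (expected_cost f0 f1 M P N T I0 S c / OPT f0 f1 N T I0 S c)))"

end

theory Submission
  imports Defs
begin

definition tterm :: "real \<Rightarrow> real \<Rightarrow> nat \<Rightarrow> (nat \<Rightarrow> nat \<Rightarrow> nat)
     \<Rightarrow> (nat \<Rightarrow> nat \<Rightarrow> nat \<Rightarrow> real) \<Rightarrow> (nat \<Rightarrow> nat \<Rightarrow> nat) \<Rightarrow> nat \<Rightarrow> real" where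
  "tterm f0 f1 N S c m1 t =
        f0 * (if (\<Sum>i<N. S t i - m1 t i) > 0 then 1 else 0)
      + f1 * (if (\<Sum>i<N. m1 t i) > 0 then 1 else 0)
      + (\<Sum>i<N. c 0 t i * real (S t i - m1 t i) + c 1 t i * real (m1 t i))"

lemma tc_eq: "total_cost f0 f1 N T S c m1 = (\<Sum>t\<in>{1..T}. tterm f0 f1 N S c m1 t)"
  by (simp add: total_cost_def tterm_def)

lemma var_lb:
  fixes a c0 c1 :: real
  assumes "a \<le> c0" "a \<le> c1" "m \<le> S"
  shows "a * real S \<le> c0 * real (S - m) + c1 * real m"
proof -
  have e: "real (S - m) = real S - real m" using assms(3) by (simp add: of_nat_diff)
  have "a * real (S - m) \<le> c0 * real (S - m)" using assms(1) by (simp add: mult_right_mono)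
  moreover have "a * real m \<le> c1 * real m" using assms(2) by (simp add: mult_right_mono)
  ultimately show ?thesis using e by (simp add: algebra_simps)
qed

lemma var_ub:
  fixes b c0 c1 :: real
  assumes "c0 \<le> b" "c1 \<le> b" "m \<le> S"
  shows "c0 * real (S - m) + c1 * real m \<le> b * real S"
proof -
  have e: "real (S - m) = real S - real m" using assms(3) by (simp add: of_nat_diff)
  have "b * real (S - m) \<ge> c0 * real (S - m)" using assms(1) by (simp add: mult_right_mono)
  moreover have "b * real m \<ge> c1 * real m" using assms(2) by (simp add: mult_right_mono)
  ultimately show ?thesis using e by (simp add: algebra_simps)
qed

lemma tterm_ge:
  assumes "0 \<le> f0" "0 \<le> f1" "\<forall>i<N. a \<le> c 0 t i \<and> a \<le> c 1 t i \<and> m1 t i \<le> S t i"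
  shows "f0 * (if (\<Sum>i<N. S t i - m1 t i) > 0 then 1 else 0) + a * (\<Sum>i<N. real (S t i))
           \<le> tterm f0 f1 N S c m1 t"
proof -
  have "a * (\<Sum>i<N. real (S t i)) = (\<Sum>i<N. a * real (S t i))" by (simp add: sum_distrib_left)
  also have "\<dots> \<le> (\<Sum>i<N. c 0 t i * real (S t i - m1 t i) + c 1 t i * real (m1 t i))"
    by (rule sum_mono) (use assms(3) var_lb in auto)
  finally have v: "a * (\<Sum>i<N. real (S t i)) \<le> (\<Sum>i<N. c 0 t i * real (S t i - m1 t i) + c 1 t i * real (m1 t i))" .
  have "0 \<le> f1 * (if (\<Sum>i<N. m1 t i) > 0 then 1 else 0)" using assms(2) by simp
  then show ?thesis unfolding tterm_def using v by linarith
qed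

lemma tterm_le:
  assumes "0 \<le> f0" "0 \<le> f1" "\<forall>i<N. c 0 t i \<le> b \<and> c 1 t i \<le> b \<and> m1 t i \<le> S t i"
  shows "tterm f0 f1 N S c m1 t \<le> f0 + f1 + b * (\<Sum>i<N. real (S t i))"
proof -
  have "(\<Sum>i<N. c 0 t i * real (S t i - m1 t i) + c 1 t i * real (m1 t i)) \<le> (\<Sum>i<N. b * real (S t i))"
    by (rule sum_mono) (use assms(3) var_ub in auto)
  also have "\<dots> = b * (\<Sum>i<N. real (S t i))" by (simp add: sum_distrib_left)
  finally have v: "(\<Sum>i<N. c 0 t i * real (S t i - m1 t i) + c 1 t i * real (m1 t i)) \<le> b * (\<Sum>i<N. real (S t i))" .
  have "f1 * (if (\<Sum>i<N. m1 t i) > 0 then 1 else 0) \<le> f1" using assms(2) by simp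
  moreover have "f0 * (if (\<Sum>i<N. S t i - m1 t i) > 0 then 1 else 0) \<le> f0" using assms(1) by simp
  ultimately show ?thesis unfolding tterm_def using v by linarith
qed

lemma feas_le: "feasible N T I0 S m1 \<Longrightarrow> t \<in> {1..T} \<Longrightarrow> i < N \<Longrightarrow> m1 t i \<le> S t i"
  unfolding feasible_def by blast

lemma tc_ge:
  assumes "0 \<le> f0" "0 \<le> f1" "0 \<le> a" "valid_costs a b N T c" "feasible N T I0 S m1"
  shows "(\<Sum>t\<in>{1..T}. a * (\<Sum>i<N. real (S t i))) \<le> total_cost f0 f1 N T S c m1"
  unfolding tc_eq
proof (rule sum_mono)
  fix t assume t: "t \<in> {1..T}"
  have "f0 * (if (\<Sum>i<N. S t i - m1 t i) > 0 then 1 else 0) + a * (\<Sum>i<N. real (S t i))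
           \<le> tterm f0 f1 N S c m1 t"
    using assms t by (intro tterm_ge) (auto simp: valid_costs_def feasible_def)
  then show "a * (\<Sum>i<N. real (S t i)) \<le> tterm f0 f1 N S c m1 t" using assms(1)
    by (smt (verit) mult_nonneg_nonneg)
qed

lemma tc_le:
  assumes "0 \<le> f0" "0 \<le> f1" "valid_costs a b N T c" "feasible N T I0 S m1"
  shows "total_cost f0 f1 N T S c m1 \<le> (\<Sum>t\<in>{1..T}. f0 + f1 + b * (\<Sum>i<N. real (S t i)))"
  unfolding tc_eq
  by (rule sum_mono, rule tterm_le) (use assms in \<open>auto simp: valid_costs_def feasible_def\<close>)

lemma tc_nonneg:
  assumes "0 \<le> f0" "0 \<le> f1" "0 \<le> a" "valid_costs a b N T c" "feasible N T I0 S m1"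
  shows "0 \<le> total_cost f0 f1 N T S c m1"
proof -
  have "0 \<le> (\<Sum>t\<in>{1..T}. a * (\<Sum>i<N. real (S t i)))" using assms(3) by (auto intro!: sum_nonneg mult_nonneg_nonneg)
  then show ?thesis using tc_ge[OF assms] by linarith
qed

lemma feas0: "feasible N T I0 S (\<lambda>t i. 0)"
  unfolding feasible_def by auto

lemma OPT_le:
  assumes "0 \<le> f0" "0 \<le> f1" "0 \<le> a" "valid_costs a b N T c" "feasible N T I0 S m1"
  shows "OPT f0 f1 N T I0 S c \<le> total_cost f0 f1 N T S c m1"
  unfolding OPT_def
proof (rule cInf_lower)
  show "total_cost f0 f1 N T S c m1 \<in> {total_cost f0 f1 N T S c m1 |m1. feasible N T I0 S m1}"
    using assms(5) by blast
  show "bdd_below {total_cost f0 f1 N T S c m1 |m1. feasible N T I0 S m1}"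
    by (rule bdd_belowI[of _ 0]) (use tc_nonneg[OF assms(1-4)] in blast)
qed

lemma OPT_ge:
  assumes "0 \<le> f0" "0 \<le> f1" "0 \<le> a" "valid_costs a b N T c"
  shows "(\<Sum>t\<in>{1..T}. a * (\<Sum>i<N. real (S t i))) \<le> OPT f0 f1 N T I0 S c"
  unfolding OPT_def
  by (rule cInf_greatest) (use feas0 tc_ge[OF assms] in blast)+

lemma pol_feas:
  assumes "randomized_policy a b f0 f1 M P" "\<omega> \<in> space M" "valid_costs a b N T c"
  shows "feasible N T I0 S (decisions (P \<omega>) N I0 S c)"
  using assms unfolding randomized_policy_def online_policy_def by blast

lemma cost_integrable:
  assumes rp: "randomized_policy a b f0 f1 M P" and v: "valid_costs a b N T c"
    and "0 \<le> f0" "0 \<le> f1" "0 \<le> a"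
  shows "integrable M (\<lambda>\<omega>. total_cost f0 f1 N T S c (decisions (P \<omega>) N I0 S c))"
proof -
  have ps: "prob_space M" using rp unfolding randomized_policy_def by blast
  then interpret prob_space M .
  show ?thesis
  proof (rule integrable_const_bound[where B="(\<Sum>t\<in>{1..T}. f0 + f1 + b * (\<Sum>i<N. real (S t i)))"])
    show "AE x in M. norm (total_cost f0 f1 N T S c (decisions (P x) N I0 S c))
        \<le> (\<Sum>t\<in>{1..T}. f0 + f1 + b * (\<Sum>i<N. real (S t i)))"
    proof (rule AE_I2)
      fix x assume x: "x \<in> space M"
      have f: "feasible N T I0 S (decisions (P x) N I0 S c)" using pol_feas[OF rp x v] .
      show "norm (total_cost f0 f1 N T S c (decisions (P x) N I0 S c))
        \<le> (\<Sum>t\<in>{1..T}. f0 + f1 + b * (\<Sum>i<N. real (S t i)))"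
        using tc_nonneg[OF assms(3-5) v f] tc_le[OF assms(3,4) v f] by simp
    qed
    show "(\<lambda>x. total_cost f0 f1 N T S c (decisions (P x) N I0 S c)) \<in> borel_measurable M"
      using rp v unfolding randomized_policy_def by blast
  qed
qed

lemma cr_ge:
  assumes "valid_costs a b N T c"
  shows "ereal (expected_cost f0 f1 M P N T I0 S c / OPT f0 f1 N T I0 S c) \<le> competitive_ratio a b f0 f1 M P"
  unfolding competitive_ratio_def
  by (rule SUP_upper2[of "(N,T,I0,S,c)"]) (use assms in auto)

lemma combine:
  assumes rp: "randomized_policy a b f0 f1 M P" and f: "0 \<le> f0" "0 \<le> f1" "0 \<le> a"
    and vA: "valid_costs a b NA TA cA" and vB: "valid_costs a b NB TB cB"
    and oA: "0 < OPT f0 f1 NA TA IA SA cA" and oB: "0 < OPT f0 f1 NB TB IB SB cB"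
    and pw: "\<forall>\<omega>\<in>space M. 2 * \<tau> \<le>
        total_cost f0 f1 NA TA SA cA (decisions (P \<omega>) NA IA SA cA) / OPT f0 f1 NA TA IA SA cA
      + total_cost f0 f1 NB TB SB cB (decisions (P \<omega>) NB IB SB cB) / OPT f0 f1 NB TB IB SB cB"
  shows "ereal \<tau> \<le> competitive_ratio a b f0 f1 M P"
proof -
  have ps: "prob_space M" using rp unfolding randomized_policy_def by blast
  then interpret prob_space M .
  define X where "X = (\<lambda>\<omega>. total_cost f0 f1 NA TA SA cA (decisions (P \<omega>) NA IA SA cA))"
  define Y where "Y = (\<lambda>\<omega>. total_cost f0 f1 NB TB SB cB (decisions (P \<omega>) NB IB SB cB))"
  define OA where "OA = OPT f0 f1 NA TA IA SA cA"
  define OB where "OB = OPT f0 f1 NB TB IB SB cB"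
  have iX: "integrable M X" unfolding X_def by (rule cost_integrable[OF rp vA f(1,2,3)])
  have iY: "integrable M Y" unfolding Y_def by (rule cost_integrable[OF rp vB f(1,2,3)])
  have "2 * \<tau> = (LINT \<omega>|M. 2 * \<tau>)" by (simp add: prob_space)
  also have "\<dots> \<le> (LINT \<omega>|M. X \<omega> / OA + Y \<omega> / OB)"
    by (rule integral_mono) (use iX iY pw in \<open>auto simp: X_def Y_def OA_def OB_def\<close>)
  also have "\<dots> = (LINT \<omega>|M. X \<omega>) / OA + (LINT \<omega>|M. Y \<omega>) / OB"
    using iX iY by (simp add: integral_add integral_divide_zero)
  finally have le: "2 * \<tau> \<le> (LINT \<omega>|M. X \<omega>) / OA + (LINT \<omega>|M. Y \<omega>) / OB" .
  show ?thesis
  proof (cases "\<tau> \<le> (LINT \<omega>|M. X \<omega>) / OA")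
    case True
    have "ereal \<tau> \<le> ereal (expected_cost f0 f1 M P NA TA IA SA cA / OPT f0 f1 NA TA IA SA cA)"
      using True by (simp add: expected_cost_def X_def OA_def)
    also have "\<dots> \<le> competitive_ratio a b f0 f1 M P" by (rule cr_ge[OF vA])
    finally show ?thesis .
  next
    case False
    then have "\<tau> \<le> (LINT \<omega>|M. Y \<omega>) / OB" using le by linarith
    then have "ereal \<tau> \<le> ereal (expected_cost f0 f1 M P NB TB IB SB cB / OPT f0 f1 NB TB IB SB cB)"
      by (simp add: expected_cost_def Y_def OB_def)
    also have "\<dots> \<le> competitive_ratio a b f0 f1 M P" by (rule cr_ge[OF vB])
    finally show ?thesis .
  qed
qed

lemma key:
  fixes a s b x l :: real
  assumes "0 < a" "a \<le> s" "s * s = a * b" "0 \<le> x" "x \<le> l" "0 < l"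
  shows "s / a \<le> (s*(l-x)+a*x)/(a*l) + (s*(l-x)+a*x+a*(l-x)+b*x)/((s+a)*l)"
proof -
  define AA where "AA = s*(l-x)+a*x"
  define BB where "BB = s*(l-x)+a*x+a*(l-x)+b*x"
  have idd: "(s + a) * AA + a * BB - s * (s + a) * l = a * (a * x + (s + a) * l - s * x) + x * (a * b - s * s)"
    unfolding AA_def BB_def by (simp add: algebra_simps)
  have "s*x \<le> s*l" using assms by (simp add: mult_left_mono)
  moreover have "0 \<le> a*x" "0 \<le> a*l" using assms by auto
  moreover have "(s+a)*l = s*l + a*l" by (simp add: algebra_simps)
  ultimately have "0 \<le> a*x+(s+a)*l-s*x" by linarith
  then have "0 \<le> a*(a*x+(s+a)*l-s*x)" using assms by simp
  then have p: "s*(s+a)*l \<le> (s+a)*AA + a*BB" using idd assms(3) by simp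
  have sa: "0 < s + a" using assms by linarith
  have "s / a = (s*((s+a)*l)) / (a*((s+a)*l))" using assms sa by simp
  also have "\<dots> \<le> ((s+a)*AA + a*BB) / (a*((s+a)*l))"
    using p assms sa by (intro divide_right_mono) (auto simp: mult.assoc)
  also have "\<dots> = ((s+a)*AA) / (a*((s+a)*l)) + (a*BB) / (a*((s+a)*l))" by (rule add_divide_distrib)
  also have "((s+a)*AA) / (a*((s+a)*l)) = AA/(a*l)" using assms sa by simp
  also have "(a*BB) / (a*((s+a)*l)) = BB/((s+a)*l)" using assms sa by simp
  finally show ?thesis unfolding AA_def BB_def .
qed

lemma tc_ge_var:
  assumes "0 \<le> f0" "0 \<le> f1"
  shows "(\<Sum>t\<in>{1..T}. \<Sum>i<N. c 0 t i * real (S t i - mm t i) + c 1 t i * real (mm t i))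
     \<le> total_cost f0 f1 N T S c mm"
  unfolding total_cost_def
  by (rule sum_mono) (use assms in auto)

lemma bound_sqrt:
  assumes rp: "randomized_policy a b f0 f1 M P" and a0: "0 < a" and ab: "a < b"
    and f: "0 \<le> f0" "0 \<le> f1"
  shows "ereal (sqrt (b / a) / 3) \<le> competitive_ratio a b f0 f1 M P"
proof -
  define s where "s = sqrt (a * b)"
  have ss: "s * s = a * b" unfolding s_def using a0 ab by simp
  have as: "a \<le> s" unfolding s_def
    using real_sqrt_le_mono[of "a*a" "a*b"] a0 ab by simp
  have sb: "s \<le> b" unfolding s_def
    using real_sqrt_le_mono[of "a*b" "b*b"] a0 ab by simp
  have r: "sqrt (b / a) = s / a"
  proof -
    have "b / a = (a * b) / (a * a)" using a0 by simp
    then have "sqrt (b / a) = sqrt (a*b) / sqrt (a*a)" by (metis real_sqrt_divide)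
    then show ?thesis unfolding s_def using a0 by simp
  qed
  define L :: nat where "L = nat \<lceil>2*(f0+f1)/a\<rceil> + 1"
  have L0: "0 < L" unfolding L_def by simp
  have "2*(f0+f1)/a \<le> real L" unfolding L_def by linarith
  then have Lge: "2*(f0+f1) \<le> a * real L" using a0 by (simp add: field_simps)
  define S where "S = (\<lambda>(t::nat) (i::nat). L)"
  define c where "c = (\<lambda>(k::nat) (t::nat) (i::nat). if k = 1 then a else if t = 1 then s else b)"
  define I where "I = (\<lambda>i::nat. L)"
  have vA: "valid_costs a b 1 1 c" unfolding valid_costs_def c_def using as sb ab by auto
  have vB: "valid_costs a b 1 2 c" unfolding valid_costs_def c_def using as sb ab by auto
  have OAge: "a * real L \<le> OPT f0 f1 1 1 I S c"
    using OPT_ge[OF f _ vA, of S I] a0 by (simp add: S_def)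
  have OBge: "a * real L \<le> OPT f0 f1 1 2 I S c"
  proof -
    have "(\<Sum>t\<in>{1..2::nat}. a * (\<Sum>i<1. real (S t i))) = 2 * a * real L"
      by (simp add: S_def numeral_2_eq_2)
    then have "2 * a * real L \<le> OPT f0 f1 1 2 I S c" using OPT_ge[OF f less_imp_le[OF a0] vB, of S I] by simp
    moreover have "0 \<le> a * real L" using a0 by simp
    ultimately show ?thesis by linarith
  qed
  have feA: "feasible 1 1 I S (\<lambda>t i. L)" unfolding feasible_def S_def I_def by auto
  have OAle: "OPT f0 f1 1 1 I S c \<le> f1 + a * real L"
    using OPT_le[OF f _ vA feA] a0 L0 by (simp add: total_cost_def S_def c_def)
  have feB: "feasible 1 2 I S (\<lambda>t i. if t = 2 then L else 0)"
    unfolding feasible_def S_def I_def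
  proof (intro ballI allI impI conjI)
    fix t i assume t: "t \<in> {1..2::nat}"
    then have "t = 1 \<or> t = 2" by auto
    then show "(\<Sum>\<tau>\<in>{1..t}. if \<tau> = 2 then L else 0) \<le> L"
      by (auto simp: numeral_2_eq_2)
  qed auto
  have OBle: "OPT f0 f1 1 2 I S c \<le> f0 + f1 + (s + a) * real L"
  proof -
    have "total_cost f0 f1 1 2 S c (\<lambda>t i. if t = 2 then L else 0) = f0 + s * real L + (f1 + a * real L)"
      using L0 by (simp add: total_cost_def S_def c_def numeral_2_eq_2)
    then show ?thesis using OPT_le[OF f _ vB feB] a0 by (simp add: algebra_simps)
  qed
  have OA0: "0 < OPT f0 f1 1 1 I S c" using OAge a0 L0 by (smt (verit) mult_pos_pos of_nat_0_less_iff)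
  have OB0: "0 < OPT f0 f1 1 2 I S c" using OBge a0 L0 by (smt (verit) mult_pos_pos of_nat_0_less_iff)
  have OAle': "OPT f0 f1 1 1 I S c \<le> 3/2 * (a * real L)" using OAle Lge f by argo
  have sal: "a * real L \<le> (s + a) * real L" using as a0 by (simp add: mult_right_mono)
  have OBle': "OPT f0 f1 1 2 I S c \<le> 3/2 * ((s + a) * real L)" using OBle Lge f sal by argo
  show ?thesis
  proof (rule combine[OF rp f less_imp_le[OF a0] vA vB OA0 OB0], intro ballI)
    fix \<omega> assume \<omega>: "\<omega> \<in> space M"
    define m1 where "m1 = decisions (P \<omega>) 1 I S c"
    have fe: "feasible 1 2 I S m1" unfolding m1_def by (rule pol_feas[OF rp \<omega> vB])
    define m where "m = m1 1 0"
    define m' where "m' = m1 2 0"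
    have mL: "m \<le> L" using fe unfolding feasible_def m_def S_def by auto
    have "(\<Sum>\<tau>\<in>{1..2::nat}. m1 \<tau> 0) \<le> L" using fe unfolding feasible_def I_def by auto
    then have mm: "m + m' \<le> L" by (simp add: m_def m'_def numeral_2_eq_2)
    define X where "X = total_cost f0 f1 1 1 S c m1"
    define Y where "Y = total_cost f0 f1 1 2 S c m1"
    have X: "s * (real L - real m) + a * real m \<le> X"
      using tc_ge_var[OF f, where T=1 and N=1 and c=c and S=S and mm=m1] mL
      by (simp add: X_def S_def c_def m_def of_nat_diff)
    have Y0: "s * (real L - real m) + a * real m + (b * (real L - real m') + a * real m') \<le> Y"
      using tc_ge_var[OF f, where T=2 and N=1 and c=c and S=S and mm=m1] mL mm
      by (simp add: Y_def S_def c_def m_def m'_def of_nat_diff numeral_2_eq_2)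
    have "(b - a) * real m' \<le> (b - a) * (real L - real m)"
      using mm ab by (intro mult_left_mono) auto
    then have Y: "s * (real L - real m) + a * real m + a * (real L - real m) + b * real m \<le> Y"
      using Y0 by (simp add: algebra_simps)
    define A where "A = s * (real L - real m) + a * real m"
    define B where "B = s * (real L - real m) + a * real m + a * (real L - real m) + b * real m"
    have A0: "0 \<le> A" unfolding A_def using mL as a0 by (simp add: mult_nonneg_nonneg)
    have B0: "0 \<le> B" unfolding B_def using mL as a0 ab by (simp add: mult_nonneg_nonneg)
    have k: "s / a \<le> A / (a * real L) + B / ((s + a) * real L)"
      unfolding A_def B_def using key[OF a0 as ss, of "real m" "real L"] mL L0 by simp
    have e1: "A / (3/2 * (a * real L)) \<le> X / OPT f0 f1 1 1 I S c"
      by (rule frac_le) (use A0 X OA0 OAle' A_def in auto)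
    have e2: "B / (3/2 * ((s + a) * real L)) \<le> Y / OPT f0 f1 1 2 I S c"
      by (rule frac_le) (use B0 Y OB0 OBle' B_def in auto)
    have "2 * (sqrt (b / a) / 3) = 2/3 * (s / a)" using r by simp
    also have "\<dots> \<le> 2/3 * (A / (a * real L) + B / ((s + a) * real L))" using k by simp
    also have "\<dots> = A / (3/2 * (a * real L)) + B / (3/2 * ((s + a) * real L))" by simp
    also have "\<dots> \<le> X / OPT f0 f1 1 1 I S c + Y / OPT f0 f1 1 2 I S c" using e1 e2 by simp
    finally show "2 * (sqrt (b / a) / 3) \<le> total_cost f0 f1 1 1 S c (decisions (P \<omega>) 1 I S c) / OPT f0 f1 1 1 I S c +
         total_cost f0 f1 1 2 S c (decisions (P \<omega>) 1 I S c) / OPT f0 f1 1 2 I S c"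
      unfolding X_def Y_def m1_def .
  qed
qed

lemma alg3:
  fixes nn a f0 f1 :: real
  assumes n2: "2 \<le> nn" and a0: "0 < a" and f: "0 \<le> f0" "0 \<le> f1"
  shows "min nn (f0 / (f1 + nn * a)) / 2 \<le> nn * f0 / (f0 + nn * f1 + 2 * nn * a)"
proof -
  have na: "0 < nn * a" using n2 a0 by simp
  have D: "0 < f1 + nn * a" using na f by linarith
  have nf1: "0 \<le> nn * f1" using n2 f by simp
  have U: "0 < f0 + nn * f1 + 2 * nn * a" using na f nf1 by linarith
  have q: "2 * (nn * a) \<le> nn * (nn * a)" using n2 na by (intro mult_right_mono) auto
  have nD: "nn * (f1 + nn * a) = nn * f1 + nn * (nn * a)" by (simp add: algebra_simps)
  show ?thesis
  proof (cases "nn * (f1 + nn * a) \<le> f0")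
    case True
    then have f0p: "0 < f0" using nD na nf1 q by linarith
    have "min nn (f0 / (f1 + nn * a)) / 2 \<le> nn / 2" by simp
    also have "nn / 2 = nn * f0 / (2 * f0)" using f0p by simp
    also have "\<dots> \<le> nn * f0 / (f0 + nn * f1 + 2 * nn * a)"
    proof (rule frac_le)
      show "0 \<le> nn * f0" using n2 f by simp
      show "f0 + nn * f1 + 2 * nn * a \<le> 2 * f0" using True nD q by (simp add: mult.assoc)
    qed (use U in auto)
    finally show ?thesis .
  next
    case False
    have "min nn (f0 / (f1 + nn * a)) / 2 \<le> f0 / (f1 + nn * a) / 2"
      by (intro divide_right_mono) auto
    also have "\<dots> = nn * f0 / (nn * (2 * (f1 + nn * a)))" using D n2 by simp
    also have "\<dots> \<le> nn * f0 / (f0 + nn * f1 + 2 * nn * a)"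
    proof (rule frac_le)
      show "0 \<le> nn * f0" using n2 f by simp
      show "f0 + nn * f1 + 2 * nn * a \<le> nn * (2 * (f1 + nn * a))" using False nD q by (simp add: algebra_simps)
    qed (use U in auto)
    finally show ?thesis .
  qed
qed

lemma bound_one:
  assumes rp: "randomized_policy a b f0 f1 M P" and a0: "0 < a" and ab: "a < b"
    and f: "0 \<le> f0" "0 \<le> f1"
  shows "ereal 1 \<le> competitive_ratio a b f0 f1 M P"
proof -
  define S where "S = (\<lambda>(t::nat) (i::nat). (1::nat))"
  define c where "c = (\<lambda>(k::nat) (t::nat) (i::nat). a)"
  define I where "I = (\<lambda>i::nat. (0::nat))"
  have v: "valid_costs a b 1 1 c" unfolding valid_costs_def c_def using ab by auto
  have "a \<le> OPT f0 f1 1 1 I S c" using OPT_ge[OF f less_imp_le[OF a0] v, of S I] by (simp add: S_def)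
  then have O0: "0 < OPT f0 f1 1 1 I S c" using a0 by linarith
  show ?thesis
  proof (rule combine[OF rp f less_imp_le[OF a0] v v O0 O0], intro ballI)
    fix \<omega> assume \<omega>: "\<omega> \<in> space M"
    have fe: "feasible 1 1 I S (decisions (P \<omega>) 1 I S c)" by (rule pol_feas[OF rp \<omega> v])
    have le: "OPT f0 f1 1 1 I S c \<le> total_cost f0 f1 1 1 S c (decisions (P \<omega>) 1 I S c)"
      by (rule OPT_le[OF f less_imp_le[OF a0] v fe])
    have "1 \<le> total_cost f0 f1 1 1 S c (decisions (P \<omega>) 1 I S c) / OPT f0 f1 1 1 I S c"
      using le O0 by simp
    then show "2 * 1 \<le> total_cost f0 f1 1 1 S c (decisions (P \<omega>) 1 I S c) / OPT f0 f1 1 1 I S c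
      + total_cost f0 f1 1 1 S c (decisions (P \<omega>) 1 I S c) / OPT f0 f1 1 1 I S c" by simp
  qed
qed

lemma sum_ind_le:
  fixes n t :: nat
  shows "(\<Sum>i<n. if t = i + 2 then (1::real) else 0) \<le> 1"
proof (cases "2 \<le> t")
  case True
  have "(\<Sum>i<n. if t = i + 2 then (1::real) else 0) = (\<Sum>i<n. if i = t - 2 then (1::real) else 0)"
    by (rule sum.cong) (use True in auto)
  also have "\<dots> \<le> 1" by (simp add: sum.delta')
  finally show ?thesis .
next
  case False
  then show ?thesis by simp
qed

lemma tterm_nonneg:
  assumes "0 \<le> f0" "0 \<le> f1" "0 \<le> a" "\<forall>i<N. a \<le> c 0 t i \<and> a \<le> c 1 t i \<and> m1 t i \<le> S t i"
  shows "0 \<le> tterm f0 f1 N S c m1 t"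
proof -
  have "0 \<le> f0 * (if (\<Sum>i<N. S t i - m1 t i) > 0 then 1 else 0) + a * (\<Sum>i<N. real (S t i))"
    using assms(1,3) by (simp add: sum_nonneg)
  moreover have "f0 * (if (\<Sum>i<N. S t i - m1 t i) > 0 then 1 else 0) + a * (\<Sum>i<N. real (S t i))
           \<le> tterm f0 f1 N S c m1 t" by (rule tterm_ge) (use assms in auto)
  ultimately show ?thesis by linarith
qed

lemma bound3:
  assumes rp: "randomized_policy a b f0 f1 M P" and a0: "0 < a" and ab: "a < b"
    and f: "0 \<le> f0" "0 \<le> f1" and n2: "2 \<le> n"
  shows "ereal (min (real n) (f0 / (f1 + real n * a)) / 4) \<le> competitive_ratio a b f0 f1 M P"
proof -
  define S where "S = (\<lambda>(t::nat) (i::nat). if t = 1 \<or> t = i + 2 then (1::nat) else 0)"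
  define c where "c = (\<lambda>(k::nat) (t::nat) (i::nat). a)"
  define I where "I = (\<lambda>i::nat. (1::nat))"
  have a0': "0 \<le> a" using a0 by simp
  have vA: "valid_costs a b n 1 c" unfolding valid_costs_def c_def using ab by auto
  have vB: "valid_costs a b n (n+1) c" unfolding valid_costs_def c_def using ab by auto
  have sn: "(\<Sum>i<n. real (S 1 i)) = real n" by (simp add: S_def)
  have "(\<Sum>t\<in>{1..1::nat}. a * (\<Sum>i<n. real (S t i))) = a * real n" using sn by simp
  then have OAge: "a * real n \<le> OPT f0 f1 n 1 I S c" using OPT_ge[OF f a0' vA, of S I] by linarith
  have "a * (\<Sum>i<n. real (S 1 i)) \<le> (\<Sum>t\<in>{1..n+1}. a * (\<Sum>i<n. real (S t i)))"
    by (rule member_le_sum) (use a0 in \<open>auto intro!: sum_nonneg mult_nonneg_nonneg\<close>)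
  then have "a * real n \<le> OPT f0 f1 n (n+1) I S c"
    using OPT_ge[OF f a0' vB, of S I] sn by simp
  moreover have nap: "0 < a * real n" using a0 n2 by simp
  ultimately have OB0: "0 < OPT f0 f1 n (n+1) I S c" by linarith
  have OA0: "0 < OPT f0 f1 n 1 I S c" using OAge nap by linarith
  have feA: "feasible n 1 I S (\<lambda>t i. 1)" unfolding feasible_def S_def I_def by auto
  have OAle: "OPT f0 f1 n 1 I S c \<le> f1 + real n * a"
    using OPT_le[OF f a0' vA feA] n2 by (simp add: total_cost_def S_def c_def)
  define mB where "mB = (\<lambda>(t::nat) (i::nat). if t = i + 2 then (1::nat) else 0)"
  have feB: "feasible n (n+1) I S mB"
    unfolding feasible_def S_def I_def mB_def by (auto simp: sum.delta)
  have OBle: "OPT f0 f1 n (n+1) I S c \<le> f0 + real n * f1 + 2 * real n * a"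
  proof -
    have t1: "tterm f0 f1 n S c mB 1 = f0 + real n * a"
      using n2 by (simp add: tterm_def S_def mB_def c_def)
    have t2: "tterm f0 f1 n S c mB t \<le> f1 + a" if t: "t \<in> {2..n+1}" for t
    proof -
      have e1: "(\<Sum>i<n. S t i - mB t i) = 0" using t by (simp add: S_def mB_def)
      have "(\<Sum>i<n. c 0 t i * real (S t i - mB t i) + c 1 t i * real (mB t i))
          = (\<Sum>i<n. a * (if t = i + 2 then (1::real) else 0))"
        by (rule sum.cong) (use t in \<open>auto simp: S_def mB_def c_def\<close>)
      also have "\<dots> = a * (\<Sum>i<n. if t = i + 2 then (1::real) else 0)" by (simp add: sum_distrib_left)
      also have "\<dots> \<le> a" using sum_ind_le[where n=n and t=t] a0 by (simp add: mult_left_le)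
      finally have v: "(\<Sum>i<n. c 0 t i * real (S t i - mB t i) + c 1 t i * real (mB t i)) \<le> a" .
      have "f1 * (if (\<Sum>i<n. mB t i) > 0 then 1 else 0) \<le> f1" using f by simp
      then show ?thesis unfolding tterm_def using e1 v by simp
    qed
    have split: "{1..n+1} = insert 1 {2..n+1}" by auto
    have "total_cost f0 f1 n (n+1) S c mB = tterm f0 f1 n S c mB 1 + (\<Sum>t\<in>{2..n+1}. tterm f0 f1 n S c mB t)"
      unfolding tc_eq split by simp
    also have "\<dots> \<le> (f0 + real n * a) + (\<Sum>t\<in>{2..n+1}. f1 + a)"
      using t1 sum_mono[of "{2..n+1}" "\<lambda>t. tterm f0 f1 n S c mB t" "\<lambda>t. f1 + a"] t2 by simp
    also have "\<dots> = f0 + real n * f1 + 2 * real n * a" by (simp add: algebra_simps)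
    finally show ?thesis using OPT_le[OF f a0' vB feB] by linarith
  qed
  show ?thesis
  proof (rule combine[OF rp f a0' vA vB OA0 OB0], intro ballI)
    fix \<omega> assume \<omega>: "\<omega> \<in> space M"
    define m1 where "m1 = decisions (P \<omega>) n I S c"
    have fe: "feasible n (n+1) I S m1" unfolding m1_def by (rule pol_feas[OF rp \<omega> vB])
    have mleS: "\<forall>i<n. a \<le> c 0 t i \<and> a \<le> c 1 t i \<and> m1 t i \<le> S t i" if "t \<in> {1..n+1}" for t
      using fe that unfolding feasible_def c_def by auto
    define E where "E = ((\<Sum>i<n. S 1 i - m1 1 i) > 0)"
    define X where "X = total_cost f0 f1 n 1 S c m1"
    define Y where "Y = total_cost f0 f1 n (n+1) S c m1"
    have X: "(if E then f0 else 0) + a * real n \<le> X"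
    proof -
      have "X = tterm f0 f1 n S c m1 1" unfolding X_def tc_eq by simp
      moreover have "f0 * (if E then 1 else 0) + a * (\<Sum>i<n. real (S 1 i))
           \<le> tterm f0 f1 n S c m1 1" unfolding E_def by (rule tterm_ge[OF f mleS]) auto
      ultimately show ?thesis using sn by (cases E) auto
    qed
    have Y0: "0 \<le> Y" unfolding Y_def tc_eq
      by (rule sum_nonneg, rule tterm_nonneg[OF f a0']) (use mleS in auto)
    have Y: "\<not> E \<Longrightarrow> real n * f0 \<le> Y"
    proof -
      assume nE: "\<not> E"
      have all1: "m1 1 i = 1" if i: "i < n" for i
      proof -
        have "(\<Sum>i<n. S 1 i - m1 1 i) = 0" using nE unfolding E_def by simp
        then have "S 1 i - m1 1 i = 0" using i by simp
        moreover have "m1 1 i \<le> S 1 i" using mleS[of 1] i by auto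
        ultimately show ?thesis by (simp add: S_def)
      qed
      have tb: "f0 \<le> tterm f0 f1 n S c m1 t" if t: "t \<in> {2..n+1}" for t
      proof -
        define i where "i = t - 2"
        have i: "i < n" "t = i + 2" using t unfolding i_def by auto
        have tt: "t \<in> {1..n+1}" using t by auto
        have "(\<Sum>\<tau>\<in>{1..t}. m1 \<tau> i) \<le> 1" using fe tt i(1) unfolding feasible_def I_def by blast
        moreover have "(\<Sum>\<tau>\<in>{1,t}. m1 \<tau> i) \<le> (\<Sum>\<tau>\<in>{1..t}. m1 \<tau> i)"
          by (rule sum_mono2) (use t in auto)
        moreover have "(\<Sum>\<tau>\<in>{1,t}. m1 \<tau> i) = m1 1 i + m1 t i" using t by simp
        ultimately have "m1 t i = 0" using all1[OF i(1)] by simp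
        then have "S t i - m1 t i = 1" using i by (simp add: S_def)
        moreover have "S t i - m1 t i \<le> (\<Sum>j<n. S t j - m1 t j)"
          by (rule member_le_sum) (use i in auto)
        ultimately have pos: "(\<Sum>j<n. S t j - m1 t j) > 0" by linarith
        have "f0 * (if (\<Sum>j<n. S t j - m1 t j) > 0 then 1 else 0) + a * (\<Sum>j<n. real (S t j))
           \<le> tterm f0 f1 n S c m1 t" by (rule tterm_ge[OF f mleS]) (use t in auto)
        moreover have "0 \<le> a * (\<Sum>j<n. real (S t j))" using a0 by (simp add: sum_nonneg)
        ultimately show ?thesis using pos by simp
      qed
      have "real n * f0 = (\<Sum>t\<in>{2..n+1}. f0)" by simp
      also have "\<dots> \<le> (\<Sum>t\<in>{2..n+1}. tterm f0 f1 n S c m1 t)" by (rule sum_mono) (rule tb)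
      also have "\<dots> \<le> (\<Sum>t\<in>{1..n+1}. tterm f0 f1 n S c m1 t)"
        by (rule sum_mono2) (use mleS in \<open>auto intro: tterm_nonneg[OF f a0']\<close>)
      finally show ?thesis unfolding Y_def tc_eq .
    qed
    define OA where "OA = OPT f0 f1 n 1 I S c"
    define OB where "OB = OPT f0 f1 n (n+1) I S c"
    have OA0': "0 < OA" "OA \<le> f1 + real n * a" using OA0 OAle unfolding OA_def by auto
    have OB0': "0 < OB" "OB \<le> f0 + real n * f1 + 2 * real n * a" using OB0 OBle unfolding OB_def by auto
    have alg: "min (real n) (f0 / (f1 + real n * a)) / 2 \<le> real n * f0 / (f0 + real n * f1 + 2 * real n * a)"
      using alg3[of "real n" a f0 f1] n2 a0 f by (simp add: mult.commute)
    have D: "0 < f1 + real n * a" using nap f by (simp add: mult.commute)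
    have mF: "min (real n) (f0 / (f1 + real n * a)) / 2 \<le> f0 / (f1 + real n * a)"
    proof -
      have "0 \<le> f0 / (f1 + real n * a)" using D f by simp
      moreover have "min (real n) (f0 / (f1 + real n * a)) \<le> f0 / (f1 + real n * a)" by simp
      moreover have "\<And>x y::real. 0 \<le> y \<Longrightarrow> x \<le> y \<Longrightarrow> x / 2 \<le> y" by linarith
      ultimately show ?thesis by blast
    qed
    have "2 * (min (real n) (f0 / (f1 + real n * a)) / 4) \<le> X / OA + Y / OB"
    proof (cases E)
      case True
      have "f0 / (f1 + real n * a) \<le> X / OA"
        by (rule frac_le) (use X True OA0' f nap in auto)
      moreover have "0 \<le> Y / OB" using Y0 OB0' by simp
      moreover have "\<And>m F x y::real. m/2 \<le> F \<Longrightarrow> F \<le> x \<Longrightarrow> 0 \<le> y \<Longrightarrow> 2*(m/4) \<le> x + y" by linarith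
      ultimately show ?thesis using mF by blast
    next
      case False
      have "real n * f0 / (f0 + real n * f1 + 2 * real n * a) \<le> Y / OB"
        by (rule frac_le) (use Y[OF False] Y0 OB0' f in auto)
      moreover have "0 \<le> X / OA" using X OA0' f nap by (simp split: if_splits)
      moreover have "\<And>m F x y::real. m/2 \<le> F \<Longrightarrow> F \<le> y \<Longrightarrow> 0 \<le> x \<Longrightarrow> 2*(m/4) \<le> x + y" by linarith
      ultimately show ?thesis using alg by blast
    qed
    then show "2 * (min (real n) (f0 / (f1 + real n * a)) / 4) \<le>
         total_cost f0 f1 n 1 S c (decisions (P \<omega>) n I S c) / OPT f0 f1 n 1 I S c +
         total_cost f0 f1 n (n + 1) S c (decisions (P \<omega>) n I S c) / OPT f0 f1 n (n + 1) I S c"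
      unfolding X_def Y_def OA_def OB_def m1_def .
  qed
qed


theorem theorem7:
  fixes a b f0 f1 :: real and M :: "'w measure" and P :: "'w \<Rightarrow> policy"
  assumes "0 < a" and "a < b" and "0 \<le> f0" and "0 \<le> f1"
    and "randomized_policy a b f0 f1 M P"
  shows "competitive_ratio a b f0 f1 M P \<ge>
     max 1 (max (ereal (sqrt (b / a) / 3))
               (SUP n \<in> {2::nat..}. ereal (min (real n) (f0 / (f1 + real n * a)) / 4)))"
proof -
  have 1: "1 \<le> competitive_ratio a b f0 f1 M P"
    using bound_one[OF assms(5,1,2,3,4)] by (simp add: one_ereal_def)
  have 2: "ereal (sqrt (b / a) / 3) \<le> competitive_ratio a b f0 f1 M P"
    by (rule bound_sqrt[OF assms(5,1,2,3,4)])
  have 3: "(SUP n \<in> {2::nat..}. ereal (min (real n) (f0 / (f1 + real n * a)) / 4)) \<le> competitive_ratio a b f0 f1 M P"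
    by (rule SUP_least) (use bound3[OF assms(5,1,2,3,4)] in auto)
  show ?thesis using 1 2 3 by simp
qed

end
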